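(* Let $M$ be a gasket automaton over $\Sigma=\{1,\dots,N\}$ and let $0<\xi<1$. Then $(\Sigma^\infty,\rho_{M,\xi})$ is a pseudo-quasimetric space; that is, for all $\mathbf x,\mathbf y,\mathbf z\in\Sigma^\infty$: $\rho_{M,\xi}(\mathbf x,\mathbf x)=0$, $\rho_{M,\xi}(\mathbf x,\mathbf y)=\rho_{M,\xi}(\mathbf y,\mathbf x)$, and there is a constant $C\ge 1$ independent of $\mathbf x,\mathbf y,\mathbf z$ with $\rho_{M,\xi}(\mathbf x,\mathbf z)\le C(\rho_{M,\xi}(\mathbf x,\mathbf y)+\rho_{M,\xi}(\mathbf y,\mathbf z))$.
   Context: $\Sigma^\infty$ is the set of infinite words $\mathbf x=x_1x_2\cdots$ over $\Sigma$. A $\Sigma$-automaton $M$ has finite state set $Q=Q_0\cup\{Id,Exit\}$, input alphabet $\Sigma^2$, initial state $Id$, final state $Exit$, and transition function $\delta:Q\times\Sigma^2\to Q$ with $\delta(Id,(i,j))=Id$ iff $i=j$. For $(\mathbf x,\mathbf y)\in\Sigma^\infty\times\Sigma^\infty$ the itinerary is $S_0=Id$, $S_k=\delta(S_{k-1},(x_k,y_k))$, stopped when $Exit$ is reached. The surviving time $T_M(\mathbf x,\mathbf y)\in\{0,1,2,\dots\}\cup\{\infty\}$ is the largest $k$ with $S_k\neq Exit$ ($\infty$ if $Exit$ is never reached), and $\rho_{M,\xi}(\mathbf x,\mathbf y)=\xi^{T_M(\mathbf x,\mathbf y)}$ with $\xi^\infty=0$. Triangle automaton: let $\alpha,\beta,\gamma$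 be three distinct elements of $\Sigma\cup\{-1,-2,-3\}$; $M$ is a $\Sigma$-automaton with $Q=\{S_{uv}:u,v\in\{\alpha,\beta,\gamma\},u\ne v\}\cup\{Id,Exit\}$ such that (i) if $\delta(Id,(i,j))=S_{uv}$ then $\delta(Id,(j,i))=S_{vu}$; (ii) $\delta(S_{uv},(i,j))=S_{uv}$ if $(i,j)=(v,u)$ and $=Exit$ otherwise; also $\delta(Exit,\cdot)=Exit$. Let $\mathcal P_{uv}=\{(i,j)\in\Sigma^2:\delta(Id,(i,j))=S_{uv}\}$ and write $i\triangleleft_{uv}j$ iff $(i,j)\in\mathcal P_{uv}$ (so $i\triangleleft_{uv}j$ iff $j\triangleleft_{vu}i$). A symbol $j$ is $uv$-minimal if there is no $i$ with $i\triangleleft_{uv}j$, $uv$-maximal if there is no $k$ with $j\triangleleft_{uv}k$, and $uv$-isolated if both. Gasket automaton: a triangle automaton such that for all distinct $u,v\in\{\alpha,\beta,\gamma\}$: (Uniqueness) $i\triangleleft_{uv}j$ and $i\triangleleft_{uv}j'$ imply $j=j'$; (Gathering) for $a,b,c\in\Sigma$, any two of $a\triangleleft_{\alpha\gamma}c$, $a\triangleleft_{\beta\gamma}b$, $b\triangleleft_{\alpha\beta}c$ imply the third; (Boundary) if $\alpha\in\Sigma$ then $\alpha$ is $\alpha\gamma$-minimal and $\alpha\beta$-minimal; if $\beta\in\Sigma$ then $\beta$ is $\beta\gamma$-minimal and $\beta\alpha$-minimal; if $\gamma\in\Sigma$ then $\gamma$ is $\gamma\alpha$-minimal and $\gamma\beta$-minimal.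 *)

theory Defs
  imports Complex_Main
begin

text \<open>Alphabet \<Sigma> = {1..N}, symbols are integers so that the extra labels -1,-2,-3
  used for \<alpha>,\<beta>,\<gamma> are available.\<close>

definition Sig :: "nat \<Rightarrow> int set" where
  "Sig N = {1..int N}"

datatype state = Id | Exit | S int int

text \<open>Infinite words over \<Sigma>; the letter x_(k+1) of the paper is x k here.\<close>
definition is_word :: "nat \<Rightarrow> (nat \<Rightarrow> int) \<Rightarrow> bool" where
  "is_word N x \<longleftrightarrow> (\<forall>k. x k \<in> Sig N)"

fun itin :: "(state \<Rightarrow> int \<times> int \<Rightarrow> state) \<Rightarrow> (nat \<Rightarrow> int) \<Rightarrow> (nat \<Rightarrow> int) \<Rightarrow> nat \<Rightarrow> state" where
  "itin \<delta> x y 0 = Id"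
| "itin \<delta> x y (Suc k) = (if itin \<delta> x y k = Exit then Exit else \<delta> (itin \<delta> x y k) (x k, y k))"

text \<open>\<rho>_{M,\<xi>}(x,y) = \<xi>^T, T the surviving time (largest k with S_k \<noteq> Exit), \<xi>^\<infinity> = 0.\<close>
definition rho :: "(state \<Rightarrow> int \<times> int \<Rightarrow> state) \<Rightarrow> real \<Rightarrow> (nat \<Rightarrow> int) \<Rightarrow> (nat \<Rightarrow> int) \<Rightarrow> real" where
  "rho \<delta> \<xi> x y =
     (if \<forall>k. itin \<delta> x y k \<noteq> Exit then 0
      else \<xi> ^ ((LEAST k. itin \<delta> x y k = Exit) - 1))"

definition tri :: "nat \<Rightarrow> (state \<Rightarrow> int \<times> int \<Rightarrow> state) \<Rightarrow> int \<Rightarrow> int \<Rightarrow> int \<Rightarrow> int \<Rightarrow> bool" where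
  "tri N \<delta> u v i j \<longleftrightarrow> i \<in> Sig N \<and> j \<in> Sig N \<and> \<delta> Id (i, j) = S u v"

definition uv_minimal :: "nat \<Rightarrow> (state \<Rightarrow> int \<times> int \<Rightarrow> state) \<Rightarrow> int \<Rightarrow> int \<Rightarrow> int \<Rightarrow> bool" where
  "uv_minimal N \<delta> u v j \<longleftrightarrow> \<not> (\<exists>i. tri N \<delta> u v i j)"

definition uv_maximal :: "nat \<Rightarrow> (state \<Rightarrow> int \<times> int \<Rightarrow> state) \<Rightarrow> int \<Rightarrow> int \<Rightarrow> int \<Rightarrow> bool" where
  "uv_maximal N \<delta> u v j \<longleftrightarrow> \<not> (\<exists>k. tri N \<delta> u v j k)"

definition triangle_automaton ::
  "nat \<Rightarrow> int \<Rightarrow> int \<Rightarrow> int \<Rightarrow> (state \<Rightarrow> int \<times> int \<Rightarrow> state) \<Rightarrow> bool" where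
  "triangle_automaton N \<alpha> \<beta> \<gamma> \<delta> \<longleftrightarrow>
     (let L = {\<alpha>, \<beta>, \<gamma>}; Q = {S u v | u v. u \<in> L \<and> v \<in> L \<and> u \<noteq> v} \<union> {Id, Exit} in
     \<alpha> \<in> Sig N \<union> {-1, -2, -3} \<and> \<beta> \<in> Sig N \<union> {-1, -2, -3} \<and> \<gamma> \<in> Sig N \<union> {-1, -2, -3} \<and>
     \<alpha> \<noteq> \<beta> \<and> \<alpha> \<noteq> \<gamma> \<and> \<beta> \<noteq> \<gamma> \<and>
     \<comment> \<open>\<delta> : Q \<times> \<Sigma>^2 \<rightarrow> Q\<close>
     (\<forall>q\<in>Q. \<forall>i\<in>Sig N. \<forall>j\<in>Sig N. \<delta> q (i, j) \<in> Q) \<and>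
     \<comment> \<open>\<delta>(Id,(i,j)) = Id iff i = j\<close>
     (\<forall>i\<in>Sig N. \<forall>j\<in>Sig N. \<delta> Id (i, j) = Id \<longleftrightarrow> i = j) \<and>
     \<comment> \<open>(i)\<close>
     (\<forall>i\<in>Sig N. \<forall>j\<in>Sig N. \<forall>u v. \<delta> Id (i, j) = S u v \<longrightarrow> \<delta> Id (j, i) = S v u) \<and>
     \<comment> \<open>(ii)\<close>
     (\<forall>u\<in>L. \<forall>v\<in>L. u \<noteq> v \<longrightarrow> (\<forall>i\<in>Sig N. \<forall>j\<in>Sig N.
         \<delta> (S u v) (i, j) = (if (i, j) = (v, u) then S u v else Exit))) \<and>
     (\<forall>i\<in>Sig N. \<forall>j\<in>Sig N. \<delta> Exit (i, j) = Exit))"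

definition gasket_automaton ::
  "nat \<Rightarrow> int \<Rightarrow> int \<Rightarrow> int \<Rightarrow> (state \<Rightarrow> int \<times> int \<Rightarrow> state) \<Rightarrow> bool" where
  "gasket_automaton N \<alpha> \<beta> \<gamma> \<delta> \<longleftrightarrow>
     triangle_automaton N \<alpha> \<beta> \<gamma> \<delta> \<and>
     \<comment> \<open>Uniqueness\<close>
     (\<forall>u\<in>{\<alpha>, \<beta>, \<gamma>}. \<forall>v\<in>{\<alpha>, \<beta>, \<gamma>}. u \<noteq> v \<longrightarrow>
        (\<forall>i j j'. tri N \<delta> u v i j \<and> tri N \<delta> u v i j' \<longrightarrow> j = j')) \<and>
     \<comment> \<open>Gathering\<close>
     (\<forall>a\<in>Sig N. \<forall>b\<in>Sig N. \<forall>c\<in>Sig N.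
        (tri N \<delta> \<alpha> \<gamma> a c \<and> tri N \<delta> \<beta> \<gamma> a b \<longrightarrow> tri N \<delta> \<alpha> \<beta> b c) \<and>
        (tri N \<delta> \<alpha> \<gamma> a c \<and> tri N \<delta> \<alpha> \<beta> b c \<longrightarrow> tri N \<delta> \<beta> \<gamma> a b) \<and>
        (tri N \<delta> \<beta> \<gamma> a b \<and> tri N \<delta> \<alpha> \<beta> b c \<longrightarrow> tri N \<delta> \<alpha> \<gamma> a c)) \<and>
     \<comment> \<open>Boundary\<close>
     (\<alpha> \<in> Sig N \<longrightarrow> uv_minimal N \<delta> \<alpha> \<gamma> \<alpha> \<and> uv_minimal N \<delta> \<alpha> \<beta> \<alpha>) \<and>
     (\<beta> \<in> Sig N \<longrightarrow> uv_minimal N \<delta> \<beta> \<gamma> \<beta> \<and> uv_minimal N \<delta> \<beta> \<alpha> \<beta>) \<and>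
     (\<gamma> \<in> Sig N \<longrightarrow> uv_minimal N \<delta> \<gamma> \<alpha> \<gamma> \<and> uv_minimal N \<delta> \<gamma> \<beta> \<gamma>)"

end

theory Submission
  imports Defs
begin

fun swp :: "state \<Rightarrow> state" where
  "swp Id = Id" | "swp Exit = Exit" | "swp (S u v) = S v u"

context
  fixes N :: nat and \<alpha> \<beta> \<gamma> :: int and \<delta> :: "state \<Rightarrow> int \<times> int \<Rightarrow> state"
  assumes G: "gasket_automaton N \<alpha> \<beta> \<gamma> \<delta>"
begin

lemma TA: "triangle_automaton N \<alpha> \<beta> \<gamma> \<delta>"
  using G by (simp add: gasket_automaton_def)

lemma T1: "i \<in> Sig N \<Longrightarrow> j \<in> Sig N \<Longrightarrow> \<delta> Id (i,j) = Id \<or> \<delta> Id (i,j) = Exit \<or>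
   (\<exists>u v. \<delta> Id (i,j) = S u v \<and> u \<in> {\<alpha>,\<beta>,\<gamma>} \<and> v \<in> {\<alpha>,\<beta>,\<gamma>} \<and> u \<noteq> v)"
  using TA unfolding triangle_automaton_def Let_def by blast

lemma T2: "i \<in> Sig N \<Longrightarrow> j \<in> Sig N \<Longrightarrow> \<delta> Id (i,j) = Id \<longleftrightarrow> i = j"
  using TA unfolding triangle_automaton_def Let_def by blast

lemma T3: "i \<in> Sig N \<Longrightarrow> j \<in> Sig N \<Longrightarrow> \<delta> Id (i,j) = S u v \<Longrightarrow> \<delta> Id (j,i) = S v u"
  using TA unfolding triangle_automaton_def Let_def by blast

lemma T4: "u \<in> {\<alpha>,\<beta>,\<gamma>} \<Longrightarrow> v \<in> {\<alpha>,\<beta>,\<gamma>} \<Longrightarrow> u \<noteq> v \<Longrightarrow> i \<in> Sig N \<Longrightarrow> j \<in> Sig N \<Longrightarrow>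
   \<delta> (S u v) (i,j) = (if (i,j) = (v,u) then S u v else Exit)"
  using TA unfolding triangle_automaton_def Let_def by blast

lemma U: "u \<in> {\<alpha>,\<beta>,\<gamma>} \<Longrightarrow> v \<in> {\<alpha>,\<beta>,\<gamma>} \<Longrightarrow> u \<noteq> v \<Longrightarrow> i \<in> Sig N \<Longrightarrow> j \<in> Sig N \<Longrightarrow>
   j' \<in> Sig N \<Longrightarrow> \<delta> Id (i,j) = S u v \<Longrightarrow> \<delta> Id (i,j') = S u v \<Longrightarrow> j = j'"
  using G unfolding gasket_automaton_def tri_def by blast

lemma B: "u \<in> {\<alpha>,\<beta>,\<gamma>} \<Longrightarrow> v \<in> {\<alpha>,\<beta>,\<gamma>} \<Longrightarrow> u \<noteq> v \<Longrightarrow> u \<in> Sig N \<Longrightarrow> i \<in> Sig N \<Longrightarrow>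
   \<delta> Id (i,u) \<noteq> S u v"
  using G unfolding gasket_automaton_def tri_def uv_minimal_def by blast

lemma conv: "tri N \<delta> u v i j \<longleftrightarrow> tri N \<delta> v u j i"
  unfolding tri_def using T3 by blast

lemma Gt: assumes "u \<in> {\<alpha>,\<beta>,\<gamma>}" "v \<in> {\<alpha>,\<beta>,\<gamma>}" "s \<in> {\<alpha>,\<beta>,\<gamma>}" "u \<noteq> v" "s \<noteq> u" "s \<noteq> v"
  "i \<in> Sig N" "j \<in> Sig N" "k \<in> Sig N" "\<delta> Id (i,j) = S u v" "\<delta> Id (j,k) = S s u"
  shows "\<delta> Id (i,k) = S s v"
proof -
  have g: "\<And>a b c. a \<in> Sig N \<Longrightarrow> b \<in> Sig N \<Longrightarrow> c \<in> Sig N \<Longrightarrow>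
        (tri N \<delta> \<alpha> \<gamma> a c \<and> tri N \<delta> \<beta> \<gamma> a b \<longrightarrow> tri N \<delta> \<alpha> \<beta> b c) \<and>
        (tri N \<delta> \<alpha> \<gamma> a c \<and> tri N \<delta> \<alpha> \<beta> b c \<longrightarrow> tri N \<delta> \<beta> \<gamma> a b) \<and>
        (tri N \<delta> \<beta> \<gamma> a b \<and> tri N \<delta> \<alpha> \<beta> b c \<longrightarrow> tri N \<delta> \<alpha> \<gamma> a c)"
    using G unfolding gasket_automaton_def by blast
  have h1: "tri N \<delta> u v i j" "tri N \<delta> s u j k" using assms by (auto simp: tri_def)
  have s3: "i \<in> Sig N" "j \<in> Sig N" "k \<in> Sig N" using assms by auto
  have d: "\<alpha> \<noteq> \<beta>" "\<alpha> \<noteq> \<gamma>" "\<beta> \<noteq> \<gamma>" using TA unfolding triangle_automaton_def Let_def by auto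
  have "(u=\<alpha> \<and> v=\<beta> \<and> s=\<gamma>) \<or> (u=\<alpha> \<and> v=\<gamma> \<and> s=\<beta>) \<or> (u=\<beta> \<and> v=\<alpha> \<and> s=\<gamma>) \<or>
        (u=\<beta> \<and> v=\<gamma> \<and> s=\<alpha>) \<or> (u=\<gamma> \<and> v=\<alpha> \<and> s=\<beta>) \<or> (u=\<gamma> \<and> v=\<beta> \<and> s=\<alpha>)"
    using assms(1-6) by auto
  then have "tri N \<delta> s v i k"
  proof (elim disjE conjE)
    assume "u=\<alpha>" "v=\<beta>" "s=\<gamma>" then show ?thesis using h1 g[OF s3(3,1,2)] conv by metis
  next
    assume "u=\<alpha>" "v=\<gamma>" "s=\<beta>" then show ?thesis using h1 g[OF s3(1,3,2)] conv by metis
  next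
    assume "u=\<beta>" "v=\<alpha>" "s=\<gamma>" then show ?thesis using h1 g[OF s3(3,2,1)] conv by metis
  next
    assume "u=\<beta>" "v=\<gamma>" "s=\<alpha>" then show ?thesis using h1 g[OF s3(1,2,3)] conv by metis
  next
    assume "u=\<gamma>" "v=\<alpha>" "s=\<beta>" then show ?thesis using h1 g[OF s3(2,3,1)] conv by metis
  next
    assume "u=\<gamma>" "v=\<beta>" "s=\<alpha>" then show ?thesis using h1 g[OF s3(2,1,3)] conv by metis
  qed
  then show ?thesis by (simp add: tri_def)
qed

abbreviation "L \<equiv> {\<alpha>,\<beta>,\<gamma>}"

lemma itin_Q: assumes "is_word N x" "is_word N y"
  shows "itin \<delta> x y k = Id \<or> itin \<delta> x y k = Exit \<or> (\<exists>u v. itin \<delta> x y k = S u v \<and> u \<in> L \<and> v \<in> L \<and> u \<noteq> v)"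
proof (induction k)
  case 0 then show ?case by simp
next
  case (Suc k)
  have xs: "x k \<in> Sig N" "y k \<in> Sig N" using assms by (auto simp: is_word_def)
  from Suc consider "itin \<delta> x y k = Id" | "itin \<delta> x y k = Exit"
    | u v where "itin \<delta> x y k = S u v" "u \<in> L" "v \<in> L" "u \<noteq> v" by blast
  then show ?case
  proof cases
    case 1 then show ?thesis using T1[OF xs] by simp
  next
    case 2 then show ?thesis by simp
  next
    case 3 then show ?thesis using T4[OF 3(2-4) xs] by simp
  qed
qed

lemma itin_S_step: assumes "is_word N x" "is_word N y" "itin \<delta> x y k = S u v" "itin \<delta> x y (Suc k) \<noteq> Exit"
  shows "itin \<delta> x y (Suc k) = S u v \<and> x k = v \<and> y k = u"
proof -
  have xs: "x k \<in> Sig N" "y k \<in> Sig N" using assms by (auto simp: is_word_def)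
  have "u \<in> L" "v \<in> L" "u \<noteq> v" using itin_Q[OF assms(1,2), of k] assms(3) by auto
  from T4[OF this xs] assms(3,4) show ?thesis by (auto split: if_splits)
qed

lemma alive_mono: "itin \<delta> x y (Suc k) \<noteq> Exit \<Longrightarrow> itin \<delta> x y k \<noteq> Exit"
  by auto

lemma itin_diag: assumes "is_word N x" shows "itin \<delta> x x k = Id"
  using assms by (induction k) (auto simp: is_word_def T2)


lemma itin_swap: assumes "is_word N x" "is_word N y" shows "itin \<delta> y x k = swp (itin \<delta> x y k)"
proof (induction k)
  case 0 then show ?case by simp
next
  case (Suc k)
  have xs: "x k \<in> Sig N" "y k \<in> Sig N" using assms by (auto simp: is_word_def)
  consider "itin \<delta> x y k = Id" | "itin \<delta> x y k = Exit"
    | u v where "itin \<delta> x y k = S u v" "u \<in> L" "v \<in> L" "u \<noteq> v" using itin_Q[OF assms] by blast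
  then show ?case
  proof cases
    case 1
    have e: "itin \<delta> y x k = Id" using 1 Suc by simp
    consider "\<delta> Id (x k, y k) = Id" | "\<delta> Id (x k, y k) = Exit"
      | u v where "\<delta> Id (x k, y k) = S u v" using T1[OF xs] by blast
    then show ?thesis
    proof cases
      case 1
      then have "x k = y k" using T2[OF xs] by blast
      then show ?thesis using e \<open>itin \<delta> x y k = Id\<close> 1 by simp
    next
      case 2
      have "\<delta> Id (y k, x k) = Exit"
      proof -
        consider "\<delta> Id (y k, x k) = Id" | "\<delta> Id (y k, x k) = Exit"
          | u v where "\<delta> Id (y k, x k) = S u v" using T1[OF xs(2,1)] by blast
        then show ?thesis
        proof cases
          case 1 then have "y k = x k" using T2[OF xs(2,1)] by blast
          then have "\<delta> Id (x k, y k) = Id" using T2[OF xs] by metis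
          then show ?thesis using 2 by simp
        next
          case 3 then have "\<delta> Id (x k, y k) = S v u" using T3[OF xs(2,1)] by blast
          then show ?thesis using 2 by simp
        qed
      qed
      then show ?thesis using e \<open>itin \<delta> x y k = Id\<close> 2 by simp
    next
      case 3 then show ?thesis using e \<open>itin \<delta> x y k = Id\<close> T3[OF xs] by simp
    qed
  next
    case 2 then show ?thesis using Suc by simp
  next
    case 3
    have e: "itin \<delta> y x k = S v u" using 3 Suc by simp
    have a1: "itin \<delta> x y (Suc k) = (if (x k, y k) = (v, u) then S u v else Exit)"
      using 3 T4[OF 3(2-4) xs] by simp
    have a2: "itin \<delta> y x (Suc k) = (if (y k, x k) = (u, v) then S v u else Exit)"
      using e T4[OF 3(3,2) _ xs(2,1)] 3(4) by simp
    show ?thesis unfolding a1 a2 by auto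
  qed
qed

lemma key: assumes wx: "is_word N x" and wy: "is_word N y" and wz: "is_word N z"
  shows "itin \<delta> x y (Suc k) \<noteq> Exit \<longrightarrow> itin \<delta> y z (Suc k) \<noteq> Exit \<longrightarrow>
    (itin \<delta> x y k = Id \<longrightarrow> itin \<delta> x z k = itin \<delta> y z k) \<and>
    (itin \<delta> y z k = Id \<longrightarrow> itin \<delta> x z k = itin \<delta> x y k) \<and>
    (\<forall>u v s t. itin \<delta> x y k = S u v \<and> itin \<delta> y z k = S s t \<longrightarrow>
       t = u \<and> ((s = v \<and> itin \<delta> x z k = Id) \<or> (s \<noteq> v \<and> itin \<delta> x z k = S s v)))"
proof (induction k)
  case 0 then show ?case by simp
next
  case (Suc k)
  show ?case
  proof (intro impI)
    assume A1: "itin \<delta> x y (Suc (Suc k)) \<noteq> Exit" and B1: "itin \<delta> y z (Suc (Suc k)) \<noteq> Exit"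
    have A0: "itin \<delta> x y (Suc k) \<noteq> Exit" and B0: "itin \<delta> y z (Suc k) \<noteq> Exit"
      using A1 B1 by auto
    have Aa: "itin \<delta> x y k \<noteq> Exit" and Bb: "itin \<delta> y z k \<noteq> Exit" using A0 B0 by auto
    note IH = Suc[rule_format, OF A0 B0]
    have xs: "x k \<in> Sig N" "y k \<in> Sig N" "z k \<in> Sig N" using wx wy wz by (auto simp: is_word_def)
    have a': "itin \<delta> x y (Suc k) = \<delta> (itin \<delta> x y k) (x k, y k)" using Aa by simp
    have b': "itin \<delta> y z (Suc k) = \<delta> (itin \<delta> y z k) (y k, z k)" using Bb by simp
    have c': "itin \<delta> x z k \<noteq> Exit \<Longrightarrow> itin \<delta> x z (Suc k) = \<delta> (itin \<delta> x z k) (x k, z k)" by simp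
    consider (aI) "itin \<delta> x y k = Id"
      | (aS) u v where "itin \<delta> x y k = S u v" "u \<in> L" "v \<in> L" "u \<noteq> v"
      using itin_Q[OF wx wy, of k] Aa by blast
    then show "(itin \<delta> x y (Suc k) = Id \<longrightarrow> itin \<delta> x z (Suc k) = itin \<delta> y z (Suc k)) \<and>
    (itin \<delta> y z (Suc k) = Id \<longrightarrow> itin \<delta> x z (Suc k) = itin \<delta> x y (Suc k)) \<and>
    (\<forall>u v s t. itin \<delta> x y (Suc k) = S u v \<and> itin \<delta> y z (Suc k) = S s t \<longrightarrow>
       t = u \<and> ((s = v \<and> itin \<delta> x z (Suc k) = Id) \<or> (s \<noteq> v \<and> itin \<delta> x z (Suc k) = S s v)))"
    proof cases
      case aI
      consider (bI) "itin \<delta> y z k = Id"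
        | (bS) s t where "itin \<delta> y z k = S s t" "s \<in> L" "t \<in> L" "s \<noteq> t"
        using itin_Q[OF wy wz, of k] Bb by blast
      then show ?thesis
      proof cases
        case bI
        have cI: "itin \<delta> x z k = Id" using IH aI bI by simp
        have a2: "itin \<delta> x y (Suc k) = \<delta> Id (x k, y k)" using a' aI by simp
        have b2: "itin \<delta> y z (Suc k) = \<delta> Id (y k, z k)" using b' bI by simp
        have c2: "itin \<delta> x z (Suc k) = \<delta> Id (x k, z k)" using c' cI by simp
        have p1: "itin \<delta> x y (Suc k) = Id \<longrightarrow> itin \<delta> x z (Suc k) = itin \<delta> y z (Suc k)"
        proof
          assume "itin \<delta> x y (Suc k) = Id"
          then have "x k = y k" using a2 T2[OF xs(1,2)] by metis
          then show "itin \<delta> x z (Suc k) = itin \<delta> y z (Suc k)" using b2 c2 by simp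
        qed
        have p2: "itin \<delta> y z (Suc k) = Id \<longrightarrow> itin \<delta> x z (Suc k) = itin \<delta> x y (Suc k)"
        proof
          assume "itin \<delta> y z (Suc k) = Id"
          then have "y k = z k" using b2 T2[OF xs(2,3)] by metis
          then show "itin \<delta> x z (Suc k) = itin \<delta> x y (Suc k)" using a2 c2 by simp
        qed
        have p3: "t' = u \<and> ((s' = v \<and> itin \<delta> x z (Suc k) = Id) \<or> (s' \<noteq> v \<and> itin \<delta> x z (Suc k) = S s' v))"
          if h: "itin \<delta> x y (Suc k) = S u v" "itin \<delta> y z (Suc k) = S s' t'" for u v s' t'
        proof -
          have uv: "u \<in> L" "v \<in> L" "u \<noteq> v" using itin_Q[OF wx wy, of "Suc k"] h(1) by auto
          have st: "s' \<in> L" "t' \<in> L" "s' \<noteq> t'" using itin_Q[OF wy wz, of "Suc k"] h(2) by auto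
          have "y (Suc k) = u" using itin_S_step[OF wx wy h(1) A1] by simp
          moreover have "y (Suc k) = t'" using itin_S_step[OF wy wz h(2) B1] by simp
          ultimately have tu: "t' = u" by simp
          have e1: "\<delta> Id (x k, y k) = S u v" using a2 h(1) by simp
          have e2: "\<delta> Id (y k, z k) = S s' u" using b2 h(2) tu by simp
          show ?thesis
          proof (cases "s' = v")
            case True
            have "\<delta> Id (y k, x k) = S v u" using T3[OF xs(1,2) e1] .
            moreover have "\<delta> Id (y k, z k) = S v u" using e2 True by simp
            ultimately have "x k = z k" using U[OF uv(2,1) uv(3)[symmetric] xs(2,1,3)] by blast
            then have "itin \<delta> x z (Suc k) = Id" using c2 T2[OF xs(1,3)] by metis
            then show ?thesis using tu True by simp
          next
            case False
            have "\<delta> Id (x k, z k) = S s' v"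
              using Gt[OF uv(1,2) st(1) uv(3) _ False xs e1 e2] st(3) tu by simp
            then show ?thesis using c2 tu False by simp
          qed
        qed
        show ?thesis using p1 p2 p3 by blast
      next
        case bS
        have cS: "itin \<delta> x z k = S s t" using IH aI bS by simp
        have bst: "itin \<delta> y z (Suc k) = S s t" "y k = t" "z k = s" using itin_S_step[OF wy wz bS(1) B0] by auto
        have a2: "itin \<delta> x y (Suc k) = \<delta> Id (x k, y k)" using a' aI by simp
        have c2: "itin \<delta> x z (Suc k) = \<delta> (S s t) (x k, z k)" using c' cS by simp
        have p1: "itin \<delta> x y (Suc k) = Id \<longrightarrow> itin \<delta> x z (Suc k) = itin \<delta> y z (Suc k)"
        proof
          assume "itin \<delta> x y (Suc k) = Id"
          then have "x k = y k" using a2 T2[OF xs(1,2)] by metis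
          then show "itin \<delta> x z (Suc k) = itin \<delta> y z (Suc k)"
            using c2 bst T4[OF bS(2-4) xs(1,3)] by simp
        qed
        have p3: False if h: "itin \<delta> x y (Suc k) = S u v" for u v
        proof -
          have uv: "u \<in> L" "v \<in> L" "u \<noteq> v" using itin_Q[OF wx wy, of "Suc k"] h(1) by auto
          have "y (Suc k) = u" using itin_S_step[OF wx wy h(1) A1] by simp
          moreover have "y (Suc k) = t" using itin_S_step[OF wy wz bst(1) B1] by simp
          ultimately have tu: "t = u" by simp
          have e1: "\<delta> Id (x k, u) = S u v" using a2 h(1) bst(2) tu by simp
          have uS: "u \<in> Sig N" using xs(2) bst(2) tu by simp
          show False using B[OF uv uS xs(1)] e1 by simp
        qed
        show ?thesis using p1 p3 bst(1) by auto
      qed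
    next
      case aS
      have ast: "itin \<delta> x y (Suc k) = S u v" "x k = v" "y k = u" using itin_S_step[OF wx wy aS(1) A0] by auto
      consider (bI) "itin \<delta> y z k = Id"
        | (bS) s t where "itin \<delta> y z k = S s t" "s \<in> L" "t \<in> L" "s \<noteq> t"
        using itin_Q[OF wy wz, of k] Bb by blast
      then show ?thesis
      proof cases
        case bI
        have cS: "itin \<delta> x z k = S u v" using IH aS bI by simp
        have b2: "itin \<delta> y z (Suc k) = \<delta> Id (y k, z k)" using b' bI by simp
        have c2: "itin \<delta> x z (Suc k) = \<delta> (S u v) (x k, z k)" using c' cS by simp
        have p2: "itin \<delta> y z (Suc k) = Id \<longrightarrow> itin \<delta> x z (Suc k) = itin \<delta> x y (Suc k)"
        proof
          assume "itin \<delta> y z (Suc k) = Id"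
          then have "y k = z k" using b2 T2[OF xs(2,3)] by metis
          then show "itin \<delta> x z (Suc k) = itin \<delta> x y (Suc k)"
            using c2 ast T4[OF aS(2-4) xs(1,3)] by simp
        qed
        have p3: False if h: "itin \<delta> y z (Suc k) = S s t" for s t
        proof -
          have st: "s \<in> L" "t \<in> L" "s \<noteq> t" using itin_Q[OF wy wz, of "Suc k"] h(1) by auto
          have "y (Suc k) = u" using itin_S_step[OF wx wy ast(1) A1] by simp
          moreover have "y (Suc k) = t" using itin_S_step[OF wy wz h(1) B1] by simp
          ultimately have tu: "t = u" by simp
          have e1: "\<delta> Id (u, z k) = S s u" using b2 h(1) ast(3) tu by simp
          have "u \<in> Sig N" using xs(2) ast(3) by simp
          have e2: "\<delta> Id (z k, u) = S u s" using T3[OF \<open>u \<in> Sig N\<close> xs(3) e1] .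
          have uL: "u \<in> L" "u \<noteq> s" using st tu by auto
          show False using B[OF uL(1) st(1) uL(2) \<open>u \<in> Sig N\<close> xs(3)] e2 by simp
        qed
        show ?thesis using p2 p3 ast(1) by auto
      next
        case bS
        have bst: "itin \<delta> y z (Suc k) = S s t" "y k = t" "z k = s" using itin_S_step[OF wy wz bS(1) B0] by auto
        have I3: "t = u \<and> ((s = v \<and> itin \<delta> x z k = Id) \<or> (s \<noteq> v \<and> itin \<delta> x z k = S s v))"
          using IH aS(1) bS(1) by blast
        have r: "t = u \<and> ((s = v \<and> itin \<delta> x z (Suc k) = Id) \<or> (s \<noteq> v \<and> itin \<delta> x z (Suc k) = S s v))"
        proof (cases "s = v")
          case True
          then have "itin \<delta> x z k = Id" using I3 by simp
          then have "itin \<delta> x z (Suc k) = \<delta> Id (x k, z k)" using c' by simp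
          also have "\<dots> = Id" using T2[OF xs(1,3)] ast(2) bst(3) True by simp
          finally show ?thesis using I3 True by simp
        next
          case False
          then have cz: "itin \<delta> x z k = S s v" using I3 by simp
          then have "itin \<delta> x z (Suc k) = \<delta> (S s v) (x k, z k)" using c' by simp
          also have "\<dots> = S s v" using T4[OF bS(2) aS(3) False xs(1,3)] ast(2) bst(3) by simp
          finally show ?thesis using I3 False by simp
        qed
        show ?thesis using r ast(1) bst(1) by auto
      qed
    qed
  qed
qed

lemma alive: assumes "is_word N x" "is_word N y" "is_word N z"
  "itin \<delta> x y (Suc k) \<noteq> Exit" "itin \<delta> y z (Suc k) \<noteq> Exit"
  shows "itin \<delta> x z k \<noteq> Exit"
proof -
  note K = key[OF assms(1-3), of k, rule_format, OF assms(4,5)]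
  have Aa: "itin \<delta> x y k \<noteq> Exit" and Bb: "itin \<delta> y z k \<noteq> Exit" using assms(4,5) by auto
  consider "itin \<delta> x y k = Id" | u v where "itin \<delta> x y k = S u v"
    using itin_Q[OF assms(1,2), of k] Aa by blast
  then show ?thesis
  proof cases
    case 1 then show ?thesis using K Bb by simp
  next
    case 2
    consider "itin \<delta> y z k = Id" | s t where "itin \<delta> y z k = S s t"
      using itin_Q[OF assms(2,3), of k] Bb by blast
    then show ?thesis
    proof cases
      case 1 then show ?thesis using K Aa by simp
    next
      case 3: 2
      show ?thesis using K 2 3 by auto
    qed
  qed
qed

lemma rho_nonneg: "0 < \<xi> \<Longrightarrow> 0 \<le> rho \<delta> \<xi> x y"
  unfolding rho_def by auto

lemma rho_lower: assumes "0 < \<xi>" "\<xi> < 1" "itin \<delta> x y n = Exit"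
  shows "\<xi> ^ (n - 1) \<le> rho \<delta> \<xi> x y"
proof -
  have ex: "\<not> (\<forall>k. itin \<delta> x y k \<noteq> Exit)" using assms(3) by blast
  have "(LEAST k. itin \<delta> x y k = Exit) \<le> n" using assms(3) by (rule Least_le)
  then have "\<xi> ^ (n - 1) \<le> \<xi> ^ ((LEAST k. itin \<delta> x y k = Exit) - 1)"
    using assms(1,2) by (intro power_decreasing) auto
  then show ?thesis unfolding rho_def if_not_P[OF ex] .
qed

lemma tri_ineq: assumes "is_word N x" "is_word N y" "is_word N z" "0 < \<xi>" "\<xi> < 1"
  shows "rho \<delta> \<xi> x z \<le> (1/\<xi>) * (rho \<delta> \<xi> x y + rho \<delta> \<xi> y z)"
proof (cases "\<forall>k. itin \<delta> x z k \<noteq> Exit")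
  case True
  then have "rho \<delta> \<xi> x z = 0" unfolding rho_def by simp
  moreover have "0 \<le> (1/\<xi>) * (rho \<delta> \<xi> x y + rho \<delta> \<xi> y z)"
    using rho_nonneg[OF assms(4)] assms(4) by simp
  ultimately show ?thesis by simp
next
  case False
  define D where "D = (LEAST k. itin \<delta> x z k = Exit)"
  have rz: "rho \<delta> \<xi> x z = \<xi> ^ (D - 1)" unfolding rho_def D_def if_not_P[OF False] ..
  have dE: "itin \<delta> x z D = Exit" unfolding D_def using False by (metis (mono_tags, lifting) LeastI_ex)
  then have D0: "D \<noteq> 0" by (cases D) auto
  have "itin \<delta> x y (Suc D) = Exit \<or> itin \<delta> y z (Suc D) = Exit"
    using alive[OF assms(1-3), of D] dE by blast
  then have "\<xi> ^ D \<le> rho \<delta> \<xi> x y + rho \<delta> \<xi> y z"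
    using rho_lower[OF assms(4,5), of x y "Suc D"] rho_lower[OF assms(4,5), of y z "Suc D"]
      rho_nonneg[OF assms(4), of x y] rho_nonneg[OF assms(4), of y z] by auto
  moreover have "\<xi> ^ D = \<xi> * \<xi> ^ (D - 1)" using D0 by (cases D) auto
  ultimately have "\<xi> * rho \<delta> \<xi> x z \<le> rho \<delta> \<xi> x y + rho \<delta> \<xi> y z" using rz by simp
  then show ?thesis using assms(4) by (simp add: field_simps)
qed

end

theorem theorem1p1:
  fixes N :: nat and \<alpha> \<beta> \<gamma> :: int and \<delta> :: "state \<Rightarrow> int \<times> int \<Rightarrow> state" and \<xi> :: real
  assumes "gasket_automaton N \<alpha> \<beta> \<gamma> \<delta>"
    and "0 < \<xi>" and "\<xi> < 1"
  shows "(\<forall>x. is_word N x \<longrightarrow> rho \<delta> \<xi> x x = 0)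
       \<and> (\<forall>x y. is_word N x \<and> is_word N y \<longrightarrow> rho \<delta> \<xi> x y = rho \<delta> \<xi> y x)
       \<and> (\<exists>C\<ge>1. \<forall>x y z. is_word N x \<and> is_word N y \<and> is_word N z \<longrightarrow>
              rho \<delta> \<xi> x z \<le> C * (rho \<delta> \<xi> x y + rho \<delta> \<xi> y z))"
proof (intro conjI allI impI)
  fix x assume "is_word N x"
  then show "rho \<delta> \<xi> x x = 0" using itin_diag[OF assms(1)] unfolding rho_def by simp
next
  fix x y assume w: "is_word N x \<and> is_word N y"
  have "\<And>k. itin \<delta> y x k = Exit \<longleftrightarrow> itin \<delta> x y k = Exit"
  proof -
    fix k
    show "itin \<delta> y x k = Exit \<longleftrightarrow> itin \<delta> x y k = Exit"
      using itin_swap[OF assms(1), of x y k] w by (cases "itin \<delta> x y k") auto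
  qed
  then show "rho \<delta> \<xi> x y = rho \<delta> \<xi> y x" unfolding rho_def by simp
next
  show "\<exists>C\<ge>1. \<forall>x y z. is_word N x \<and> is_word N y \<and> is_word N z \<longrightarrow>
              rho \<delta> \<xi> x z \<le> C * (rho \<delta> \<xi> x y + rho \<delta> \<xi> y z)"
    using tri_ineq[OF assms(1)] assms(2,3) by (intro exI[of _ "1/\<xi>"]) auto
qed

end
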